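(* Let $\mathcal C^*$ be as in the context and let $\ell$ be a positive integer with $|\mathcal C^*|\ge\ell$. Then there is a set $\mathbb T$ of neighborhood trees such that: (T1) $\ell\le|\mathcal V|\le\ell^2$ for every $(\mathcal V,E,r)\in\mathbb T$; (T2) $\bigcup_{(\mathcal V,E,r)\in\mathbb T}\mathcal V=\mathcal C^*$; (T3) for any two distinct trees $(\mathcal V,E,r),(\mathcal V',E',r')\in\mathbb T$, the sets $\mathcal V\setminus\{r\}$ and $\mathcal V'\setminus\{r'\}$ are disjoint.
   Context: $\mathcal C^*$ is the set of client representatives: given finite sets $\mathcal F,\mathcal C$, a metric $d$ on $\mathcal F\cup\mathcal C$, reals $x_{i,j}\ge0$ with $\sum_ix_{i,j}=1$, $d_{av}(j)=\sum_ix_{i,j}d(i,j)$, and a positive integer parameter $\ell_0$, start with $\mathcal C^*=\emptyset$, $R=\mathcal C$; while $R\ne\emptyset$, choose $v\in R$ with smallest $d_{av}(v)$, add it to $\mathcal C^*$, and remove from $R$ all $j$ with $d(j,v)\le2\ell_0d_{av}(j)$. A rooted tree $T=(\mathcal V,E,r)$ consists of a vertex set $\mathcal V\subseteq\mathcal C^*$, an edge set $E$ forming a tree on $\mathcal V$, and a root $r\in\mathcal V$. For $v\in\mathcal V$, $\Lambda_T(v)$ is the set of vertices of the subtree rooted at $v$, and for $v\ne r$, $\rho_T(v)$ is the parent of $v$. $T$ is a neighborhood tree if for every $v\in\mathcal V\setminus\{r\}$, $d(v,\mathcal C^*\setminus\Lambda_T(v))=d(v,\rho_T(v))$, where $d(v,\mathcal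 X)=\min_{w\in\mathcal X}d(v,w)$. *)

theory Defs
  imports Complex_Main
begin

definition is_metric_on :: "'a set \<Rightarrow> ('a \<Rightarrow> 'a \<Rightarrow> real) \<Rightarrow> bool" where
  "is_metric_on S d \<longleftrightarrow>
     (\<forall>u\<in>S. \<forall>v\<in>S. d u v \<ge> 0) \<and>
     (\<forall>u\<in>S. \<forall>v\<in>S. d u v = 0 \<longleftrightarrow> u = v) \<and>
     (\<forall>u\<in>S. \<forall>v\<in>S. d u v = d v u) \<and>
     (\<forall>u\<in>S. \<forall>v\<in>S. \<forall>w\<in>S. d u w \<le> d u v + d v w)"

definition d_av :: "'a set \<Rightarrow> ('a \<Rightarrow> 'a \<Rightarrow> real) \<Rightarrow> ('a \<Rightarrow> 'a \<Rightarrow> real) \<Rightarrow> 'a \<Rightarrow> real" where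
  "d_av F d x j = (\<Sum>i\<in>F. x i j * d i j)"

text \<open>One step of the greedy procedure on the state (C*, R); ties in the choice
  of v with smallest average distance are broken arbitrarily.\<close>
inductive reps_run :: "'a set \<Rightarrow> 'a set \<Rightarrow> ('a \<Rightarrow> 'a \<Rightarrow> real) \<Rightarrow> ('a \<Rightarrow> 'a \<Rightarrow> real)
    \<Rightarrow> nat \<Rightarrow> 'a set \<Rightarrow> 'a set \<Rightarrow> bool"
  for F C d x l0 where
  start: "reps_run F C d x l0 {} C"
| step: "reps_run F C d x l0 Cs R \<Longrightarrow> v \<in> R \<Longrightarrow>
          (\<forall>u\<in>R. d_av F d x v \<le> d_av F d x u) \<Longrightarrow>
          reps_run F C d x l0 (insert v Cs)
             (R - {j\<in>R. d j v \<le> 2 * real l0 * d_av F d x j})"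

definition client_reps :: "'a set \<Rightarrow> 'a set \<Rightarrow> ('a \<Rightarrow> 'a \<Rightarrow> real) \<Rightarrow> ('a \<Rightarrow> 'a \<Rightarrow> real)
    \<Rightarrow> nat \<Rightarrow> 'a set \<Rightarrow> bool" where
  "client_reps F C d x l0 Cs \<longleftrightarrow> reps_run F C d x l0 Cs {}"

definition adj :: "'a set set \<Rightarrow> ('a \<times> 'a) set" where
  "adj E = {(u, v). {u, v} \<in> E \<and> u \<noteq> v}"

definition connected_in :: "'a set set \<Rightarrow> 'a \<Rightarrow> 'a \<Rightarrow> bool" where
  "connected_in E u v \<longleftrightarrow> (u, v) \<in> (adj E)\<^sup>*"

definition is_tree :: "'a set \<Rightarrow> 'a set set \<Rightarrow> bool" where
  "is_tree V E \<longleftrightarrow> finite V \<and> V \<noteq> {} \<and>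
     (\<forall>e\<in>E. e \<subseteq> V \<and> card e = 2) \<and>
     (\<forall>u\<in>V. \<forall>v\<in>V. connected_in E u v) \<and>
     \<comment> \<open>acyclic: no edge lies on a cycle\<close>
     (\<forall>u v. {u, v} \<in> E \<and> u \<noteq> v \<longrightarrow> \<not> connected_in (E - {{u, v}}) u v)"

type_synonym 'a rtree = "'a set \<times> 'a set set \<times> 'a"

definition is_rooted_tree :: "'a set \<Rightarrow> 'a rtree \<Rightarrow> bool" where
  "is_rooted_tree Cs T = (case T of (V, E, r) \<Rightarrow> V \<subseteq> Cs \<and> is_tree V E \<and> r \<in> V)"

text \<open>Vertex set of the subtree rooted at v: the vertices w whose path to the root
  passes through v, i.e. w = v or w is separated from r once v is deleted.\<close>
definition subtree :: "'a rtree \<Rightarrow> 'a \<Rightarrow> 'a set" where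
  "subtree T v = (case T of (V, E, r) \<Rightarrow>
     {w\<in>V. w = v \<or> \<not> connected_in {e\<in>E. v \<notin> e} w r})"

definition parent :: "'a rtree \<Rightarrow> 'a \<Rightarrow> 'a" where
  "parent T v = (case T of (V, E, r) \<Rightarrow> THE u. {u, v} \<in> E \<and> u \<noteq> v \<and> u \<notin> subtree T v)"

definition dist_set :: "('a \<Rightarrow> 'a \<Rightarrow> real) \<Rightarrow> 'a \<Rightarrow> 'a set \<Rightarrow> real" where
  "dist_set d v X = Min ((\<lambda>w. d v w) ` X)"

definition neighborhood_tree :: "('a \<Rightarrow> 'a \<Rightarrow> real) \<Rightarrow> 'a set \<Rightarrow> 'a rtree \<Rightarrow> bool" where
  "neighborhood_tree d Cs T \<longleftrightarrow> is_rooted_tree Cs T \<and>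
     (case T of (V, E, r) \<Rightarrow>
        \<forall>v\<in>V - {r}. dist_set d v (Cs - subtree T v) = d v (parent T v))"

end

theory Submission
  imports Defs
begin


inductive rch :: "('a \<Rightarrow> 'a) \<Rightarrow> 'a \<Rightarrow> 'a \<Rightarrow> 'a \<Rightarrow> bool" for q t v where
  base: "rch q t v v"
| step: "w \<noteq> v \<Longrightarrow> w \<noteq> t \<Longrightarrow> rch q t v (q w) \<Longrightarrow> rch q t v w"

lemma rch_trans: "rch q t v x \<Longrightarrow> rch q t w v \<Longrightarrow> rch q t w x"
proof (induction rule: rch.induct)
  case base then show ?case .
next
  case (step x)
  then show ?case by (cases "x = w") (auto intro: rch.intros)
qed

lemma rch_transfer:
  assumes "rch q t v x" "x \<in> V"
    "\<forall>y\<in>V. y \<noteq> t \<longrightarrow> y \<noteq> v \<longrightarrow> q y \<in> V \<and> y \<noteq> t' \<and> q' y = q y"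
  shows "rch q' t' v x"
  using assms
proof (induction rule: rch.induct)
  case base show ?case by (rule rch.base)
next
  case (step x)
  then show ?case by (metis rch.step)
qed

lemma rch_t_target: "rch q t v t \<Longrightarrow> t = v"
  by (cases rule: rch.cases) auto

lemma rch_noloop:
  assumes "rch q t t y" "rch q t v y" "rch q t v (q v)" "v \<noteq> t"
  shows False
  using assms
proof (induction y rule: rch.induct)
  case base then show ?case using rch_t_target by metis
next
  case (step y)
  show ?case
  proof (cases "y = v")
    case True then show ?thesis using step by simp
  next
    case False
    from step.prems(1) False have "rch q t v (q y)"
      by (cases rule: rch.cases) auto
    then show ?thesis using step by blast
  qed
qed

lemma rch_inv: "rch q t v w \<Longrightarrow> w \<noteq> v \<Longrightarrow> rch q t v (q w)"
  by (cases rule: rch.cases) auto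

lemma rch_not_fix: "rch q t t v \<Longrightarrow> v \<noteq> t \<Longrightarrow> q v \<noteq> v"
  using rch_noloop[of q t v v] rch.base[of q t v] by metis

lemma rch_not_parent: "rch q t t v \<Longrightarrow> v \<noteq> t \<Longrightarrow> \<not> rch q t v (q v)"
  using rch_noloop[of q t v v] by (auto intro: rch.intros)

lemma sym_adj: "sym (adj E)"
  unfolding adj_def sym_def by (auto simp: insert_commute)

lemma rtrancl_adj_sym: "(u, v) \<in> (adj E)\<^sup>* \<Longrightarrow> (v, u) \<in> (adj E)\<^sup>*"
  by (metis sym_adj sym_conv_converse_eq rtrancl_converseI)

definition edges :: "('a \<Rightarrow> 'a) \<Rightarrow> 'a set \<Rightarrow> 'a \<Rightarrow> 'a set set" where
  "edges q V t = (\<lambda>v. {v, q v}) ` (V - {t})"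

locale ptree =
  fixes q :: "'a \<Rightarrow> 'a" and V :: "'a set" and t :: 'a
  assumes fin: "finite V" and tV: "t \<in> V" and qV: "\<And>v. v \<in> V \<Longrightarrow> v \<noteq> t \<Longrightarrow> q v \<in> V"
    and reach: "\<And>v. v \<in> V \<Longrightarrow> rch q t t v"
begin

abbreviation "E \<equiv> edges q V t"

lemma qne: "v \<in> V \<Longrightarrow> v \<noteq> t \<Longrightarrow> q v \<noteq> v"
  using rch_not_fix reach by metis

lemma edge_iff: "e \<in> E \<longleftrightarrow> (\<exists>y. y \<in> V \<and> y \<noteq> t \<and> e = {y, q y})"
  unfolding edges_def by auto

lemma adj_iff: "(a, b) \<in> adj E \<longleftrightarrow> a \<noteq> b \<and> (\<exists>y. y \<in> V \<and> y \<noteq> t \<and> {a, b} = {y, q y})"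
  unfolding adj_def edge_iff by auto

lemma conn_root: "v \<in> V \<Longrightarrow> (v, t) \<in> (adj E)\<^sup>*"
proof -
  assume "v \<in> V"
  have "rch q t t v" using reach \<open>v \<in> V\<close> by blast
  then show ?thesis using \<open>v \<in> V\<close>
  proof (induction rule: rch.induct)
    case base then show ?case by simp
  next
    case (step w)
    have "(w, q w) \<in> adj E" using step qne[of w] by (auto simp: adj_iff)
    moreover have "(q w, t) \<in> (adj E)\<^sup>*" using step qV by blast
    ultimately show ?case by (rule converse_rtrancl_into_rtrancl)
  qed
qed

lemma closed_rtrancl:
  assumes "\<And>a b. (a, b) \<in> R \<Longrightarrow> a \<in> D \<longleftrightarrow> b \<in> D" "(x, y) \<in> R\<^sup>*"
  shows "x \<in> D \<longleftrightarrow> y \<in> D"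
  using assms(2) by (induction rule: rtrancl_induct) (auto dest: assms(1))

lemma is_tree: "is_tree V E"
  unfolding is_tree_def
proof (intro conjI ballI allI impI)
  show "finite V" by (rule fin)
  show "V \<noteq> {}" using tV by blast
  fix e assume "e \<in> E"
  then obtain y where y: "y \<in> V" "y \<noteq> t" "e = {y, q y}" by (auto simp: edge_iff)
  then show "e \<subseteq> V" using qV by auto
  show "card e = 2" using y qne[of y] by auto
next
  fix u v assume "u \<in> V" "v \<in> V"
  then show "connected_in E u v" unfolding connected_in_def
    using conn_root rtrancl_adj_sym by (meson rtrancl_trans)
next
  fix u v assume uv: "{u, v} \<in> E \<and> u \<noteq> v"
  then obtain x where x: "x \<in> V" "x \<noteq> t" "{u, v} = {x, q x}" by (auto simp: edge_iff)
  let ?D = "{w. rch q t x w}"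
  have cl: "a \<in> ?D \<longleftrightarrow> b \<in> ?D" if "(a, b) \<in> adj (E - {{u, v}})" for a b
  proof -
    from that have ab: "{a, b} \<in> E" "{a, b} \<noteq> {u, v}" "a \<noteq> b" by (auto simp: adj_def)
    then obtain y where y0: "y \<in> V" "y \<noteq> t" "{a, b} = {y, q y}" by (auto simp: edge_iff)
    then have y: "y \<in> V" "y \<noteq> t" "{a, b} = {y, q y}" "{y, q y} \<noteq> {x, q x}" "a \<noteq> b"
      using ab x by auto
    have yx: "y \<noteq> x" using y by auto
    have "y \<in> ?D \<longleftrightarrow> q y \<in> ?D" using yx y rch_inv[of q t x y] rch.step[of y x t q] by auto
    then show ?thesis using y(3) by (auto simp: doubleton_eq_iff)
  qed
  have xD: "x \<in> ?D" by (simp add: rch.base)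
  have qxD: "q x \<notin> ?D" using rch_not_parent[OF reach[OF x(1)] x(2)] by simp
  show "\<not> connected_in (E - {{u, v}}) u v"
  proof
    assume "connected_in (E - {{u, v}}) u v"
    then have "(u, v) \<in> (adj (E - {{u, v}}))\<^sup>*" by (simp add: connected_in_def)
    then have "u \<in> ?D \<longleftrightarrow> v \<in> ?D" using closed_rtrancl[OF cl] by blast
    then show False using x(3) xD qxD by (auto simp: doubleton_eq_iff)
  qed
qed

lemma subtree_eq:
  assumes "v \<in> V" "v \<noteq> t"
  shows "subtree (V, E, t) v = {w\<in>V. rch q t v w}"
proof -
  let ?E = "{e\<in>E. v \<notin> e}"
  have A: "(w, t) \<in> (adj ?E)\<^sup>*" if "rch q t t w" "w \<in> V" "\<not> rch q t v w" for w
    using that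
  proof (induction rule: rch.induct)
    case base then show ?case by simp
  next
    case (step w)
    have wv: "w \<noteq> v" using step.prems rch.base by metis
    have qwv: "\<not> rch q t v (q w)" using step.prems step.hyps rch.step[of w v t q] wv by blast
    then have "q w \<noteq> v" using rch.base by metis
    then have "(w, q w) \<in> adj ?E" using step wv qne[of w] by (auto simp: adj_def edges_def)
    moreover have "(q w, t) \<in> (adj ?E)\<^sup>*" using step qV qwv by blast
    ultimately show ?case by (rule converse_rtrancl_into_rtrancl)
  qed
  let ?D = "{w. rch q t v w \<and> w \<noteq> v}"
  have cl: "a \<in> ?D \<longleftrightarrow> b \<in> ?D" if "(a, b) \<in> adj ?E" for a b
  proof -
    from that obtain y where y: "y \<in> V" "y \<noteq> t" "{a, b} = {y, q y}" "v \<notin> {y, q y}"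
      unfolding adj_def edges_def by auto
    have "y \<in> ?D \<longleftrightarrow> q y \<in> ?D" using y rch_inv[of q t v y] rch.step[of y v t q] by auto
    then show ?thesis using y(3) by (auto simp: doubleton_eq_iff)
  qed
  have tD: "t \<notin> ?D" by (auto dest: rch_t_target)
  show ?thesis
    unfolding subtree_def connected_in_def
  proof (simp, intro Collect_cong conj_cong refl)
    fix w assume "w \<in> V"
    show "(w = v \<or> (w, t) \<notin> (adj ?E)\<^sup>*) = rch q t v w"
    proof
      assume "w = v \<or> (w, t) \<notin> (adj ?E)\<^sup>*"
      then show "rch q t v w" using A[of w] reach \<open>w \<in> V\<close> rch.base by metis
    next
      assume r: "rch q t v w"
      show "w = v \<or> (w, t) \<notin> (adj ?E)\<^sup>*"
      proof (cases "w = v")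
        case False
        then have "w \<in> ?D" using r by simp
        then show ?thesis using closed_rtrancl[OF cl] tD by blast
      qed simp
    qed
  qed
qed

lemma parent_eq:
  assumes "v \<in> V" "v \<noteq> t"
  shows "parent (V, E, t) v = q v"
proof -
  have P: "parent (V, E, t) v = (THE u. {u, v} \<in> E \<and> u \<noteq> v \<and> u \<notin> subtree (V, E, t) v)"
    unfolding parent_def by (simp only: prod.case)
  have S: "subtree (V, E, t) v = {w\<in>V. rch q t v w}" by (rule subtree_eq[OF assms])
  have nr: "\<not> rch q t v (q v)" using rch_not_parent[OF reach[OF assms(1)] assms(2)] .
  have qE: "{q v, v} \<in> E" using assms unfolding edges_def by (auto simp: insert_commute)
  have "(THE u. {u, v} \<in> E \<and> u \<noteq> v \<and> u \<notin> subtree (V, E, t) v) = q v"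
  proof (rule the_equality)
    show "{q v, v} \<in> E \<and> q v \<noteq> v \<and> q v \<notin> subtree (V, E, t) v"
      using qE qne[OF assms] nr S by blast
  next
    fix u assume u: "{u, v} \<in> E \<and> u \<noteq> v \<and> u \<notin> subtree (V, E, t) v"
    then obtain y where y: "y \<in> V" "y \<noteq> t" "{u, v} = {y, q y}" unfolding edge_iff by blast
    show "u = q v"
    proof (cases "u = y")
      case True
      then have "q u = v" using y u by (auto simp: doubleton_eq_iff)
      then have "rch q t v u" using u y True rch.step[of u v t q] rch.base by metis
      then show ?thesis using u y True S by blast
    next
      case False
      then show ?thesis using y u by (auto simp: doubleton_eq_iff)
    qed
  qed
  then show ?thesis using P by simp
qed

end


definition valid :: "'a set \<Rightarrow> ('a \<Rightarrow> 'a \<Rightarrow> real) \<Rightarrow> ('a \<Rightarrow> 'a) \<Rightarrow> 'a set \<Rightarrow> 'a \<Rightarrow> bool" where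
  "valid Cs d q V t \<longleftrightarrow> finite V \<and> t \<in> V \<and> V \<subseteq> Cs \<and> (\<forall>v\<in>V. v \<noteq> t \<longrightarrow> q v \<in> V) \<and>
     (\<forall>v\<in>V. rch q t t v) \<and>
     (\<forall>v\<in>V. v \<noteq> t \<longrightarrow> (\<forall>w\<in>Cs. d v w < d v (q v) \<longrightarrow> w \<in> V \<and> rch q t v w))"

lemma valid_nbh:
  assumes "valid Cs d q V t" "finite Cs"
  shows "neighborhood_tree d Cs (V, edges q V t, t)"
proof -
  interpret ptree q V t using assms(1) unfolding valid_def by unfold_locales auto
  have "is_rooted_tree Cs (V, E, t)" using is_tree assms(1) unfolding is_rooted_tree_def valid_def by auto
  moreover have "dist_set d v (Cs - subtree (V, E, t) v) = d v (parent (V, E, t) v)"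
    if v: "v \<in> V" "v \<noteq> t" for v
  proof -
    have S: "subtree (V, E, t) v = {w\<in>V. rch q t v w}" by (rule subtree_eq[OF v])
    have nr: "\<not> rch q t v (q v)" using rch_not_parent[OF reach[OF v(1)] v(2)] .
    have qin: "q v \<in> Cs - subtree (V, E, t) v" using S nr qV[OF v] assms(1) unfolding valid_def by auto
    have le: "d v (q v) \<le> d v w" if "w \<in> Cs - subtree (V, E, t) v" for w
    proof (rule ccontr)
      assume "\<not> d v (q v) \<le> d v w"
      then have "w \<in> V \<and> rch q t v w" using assms(1) v that unfolding valid_def by auto
      then show False using that S by auto
    qed
    have "Min ((\<lambda>w. d v w) ` (Cs - subtree (V, E, t) v)) = d v (q v)"
      by (rule Min_eqI) (use assms(2) qin le in auto)
    then show ?thesis unfolding dist_set_def using parent_eq[OF v] by simp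
  qed
  ultimately show ?thesis unfolding neighborhood_tree_def by auto
qed

lemma valid_cong:
  assumes "valid Cs d q V t" "\<forall>y\<in>V. y \<noteq> t \<longrightarrow> q' y = q y"
  shows "valid Cs d q' V t"
proof -
  have h: "\<forall>y\<in>V. y \<noteq> t \<longrightarrow> y \<noteq> v \<longrightarrow> q y \<in> V \<and> y \<noteq> t \<and> q' y = q y" for v
    using assms unfolding valid_def by auto
  show ?thesis using assms(1) unfolding valid_def
  proof (intro conjI ballI impI)
    fix v assume "v \<in> V" "finite V \<and> t \<in> V \<and> V \<subseteq> Cs \<and> (\<forall>v\<in>V. v \<noteq> t \<longrightarrow> q v \<in> V) \<and> (\<forall>v\<in>V. rch q t t v) \<and>
     (\<forall>v\<in>V. v \<noteq> t \<longrightarrow> (\<forall>w\<in>Cs. d v w < d v (q v) \<longrightarrow> w \<in> V \<and> rch q t v w))"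
    then show "rch q' t t v" using rch_transfer[OF _ _ h[of t]] by blast
  next
    fix v w assume a: "v \<in> V" "v \<noteq> t" "w \<in> Cs" "d v w < d v (q' v)" "finite V \<and> t \<in> V \<and> V \<subseteq> Cs \<and> (\<forall>v\<in>V. v \<noteq> t \<longrightarrow> q v \<in> V) \<and> (\<forall>v\<in>V. rch q t t v) \<and>
     (\<forall>v\<in>V. v \<noteq> t \<longrightarrow> (\<forall>w\<in>Cs. d v w < d v (q v) \<longrightarrow> w \<in> V \<and> rch q t v w))"
    then have "w \<in> V \<and> rch q t v w" using assms(2) by auto
    then show "w \<in> V" "rch q' t v w" using rch_transfer[OF _ _ h[of v]] by blast+
  qed (use assms(2) in auto)
qed

lemma valid_hang:
  assumes V1: "valid Cs d q V1 v" and V2: "valid Cs d q V2 t" and "v \<in> V2" and dj: "(V1 - {v}) \<inter> V2 = {}"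
  shows "valid Cs d q (V1 \<union> V2) t"
proof -
  have h: "\<forall>y\<in>V1. y \<noteq> v \<longrightarrow> y \<noteq> x \<longrightarrow> q y \<in> V1 \<and> y \<noteq> t \<and> q y = q y" for x
    using V1 V2 dj unfolding valid_def by auto
  have rv: "rch q t t v" using V2 \<open>v \<in> V2\<close> unfolding valid_def by auto
  have A: "rch q t t x" if "x \<in> V1" for x
  proof -
    have "rch q v v x" using V1 that unfolding valid_def by auto
    then have "rch q t v x" using rch_transfer[OF _ that h[of v]] by blast
    then show ?thesis using rch_trans rv by metis
  qed
  have L: "w \<in> V1 \<union> V2 \<and> rch q t x w"
    if x: "x \<in> V1 \<union> V2" "x \<noteq> t" and w: "w \<in> Cs" "d x w < d x (q x)" for x w
  proof (cases "x \<in> V2")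
    case True
    then show ?thesis using V2 x w unfolding valid_def by auto
  next
    case False
    then have "x \<in> V1" "x \<noteq> v" using x \<open>v \<in> V2\<close> by auto
    then have "w \<in> V1 \<and> rch q v x w" using V1 w unfolding valid_def by auto
    then show ?thesis using rch_transfer[OF _ _ h[of x]] by blast
  qed
  have Q: "q x \<in> V1 \<union> V2" if "x \<in> V1 \<union> V2" "x \<noteq> t" for x
    using that V1 V2 \<open>v \<in> V2\<close> unfolding valid_def by (cases "x = v") auto
  have R: "rch q t t x" if "x \<in> V1 \<union> V2" for x
    using that A V2 unfolding valid_def by auto
  have F: "finite (V1 \<union> V2)" "t \<in> V1 \<union> V2" "V1 \<union> V2 \<subseteq> Cs" using V1 V2 unfolding valid_def by auto
  show ?thesis unfolding valid_def using L Q R F by blast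
qed

lemma valid_hang_many:
  assumes "finite A" "valid Cs d q V2 t" "A \<subseteq> V2"
    "\<forall>v\<in>A. valid Cs d q (insert v (pd v)) v" "\<forall>v\<in>A. pd v \<inter> V2 = {}"
    "\<forall>v\<in>A. \<forall>w\<in>A. v \<noteq> w \<longrightarrow> pd v \<inter> pd w = {}"
  shows "valid Cs d q (V2 \<union> (\<Union>v\<in>A. pd v)) t"
  using assms
proof (induction A rule: finite_induct)
  case empty then show ?case by simp
next
  case (insert x F)
  have IH: "valid Cs d q (V2 \<union> (\<Union>v\<in>F. pd v)) t" using insert by auto
  have "valid Cs d q (insert x (pd x) \<union> (V2 \<union> (\<Union>v\<in>F. pd v))) t"
  proof (rule valid_hang[OF _ IH])
    show "valid Cs d q (insert x (pd x)) x" using insert by auto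
    show "x \<in> V2 \<union> (\<Union>v\<in>F. pd v)" using insert by auto
    show "(insert x (pd x) - {x}) \<inter> (V2 \<union> (\<Union>v\<in>F. pd v)) = {}"
      using insert.prems insert.hyps by fastforce
  qed
  moreover have "insert x (pd x) \<union> (V2 \<union> (\<Union>v\<in>F. pd v)) = V2 \<union> (\<Union>v\<in>insert x F. pd v)"
    using insert by auto
  ultimately show ?case by simp
qed


lemma chain_rch:
  assumes inj: "inj_on c {0..<n}" and qc: "\<forall>i. Suc i < n \<longrightarrow> q (c i) = c (Suc i)"
    and "i < n" and "t \<notin> c ` {0..<i}"
  shows "j \<le> i \<Longrightarrow> rch q t (c i) (c j)"
proof (induction "i - j" arbitrary: j)
  case 0 then have "j = i" by simp
  then show ?case by (simp add: rch.base)
next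
  case (Suc m)
  then have ji: "j < i" by simp
  have "rch q t (c i) (c (Suc j))" using Suc by simp
  moreover have "c j \<noteq> c i" using inj ji \<open>i < n\<close> by (auto dest: inj_onD)
  moreover have "c j \<noteq> t" using assms(4) ji by auto
  moreover have "q (c j) = c (Suc j)" using qc ji \<open>i < n\<close> by auto
  ultimately show ?case by (metis rch.step)
qed

lemma valid_chain:
  assumes n: "1 \<le> n" and inj: "inj_on c {0..<n}" and sub: "c ` {0..<n} \<subseteq> Cs"
    and qc: "\<forall>i. Suc i < n \<longrightarrow> q (c i) = c (Suc i)"
    and near: "\<forall>i. Suc i < n \<longrightarrow> (\<forall>w\<in>Cs. d (c i) w < d (c i) (c (Suc i)) \<longrightarrow> w \<in> c ` {0..i})"
  shows "valid Cs d q (c ` {0..<n}) (c (n-1))"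
proof -
  let ?t = "c (n-1)"
  have tn: "?t \<notin> c ` {0..<i}" if "i < n" "i \<le> n - 1" for i
    using inj that n by (auto dest: inj_onD)
  have R: "rch q ?t (c i) (c j)" if "j \<le> i" "i < n" for i j
    by (rule chain_rch[OF inj qc that(2) tn[OF that(2)]]) (use that in auto)
  have ne: "i < n - 1" if "i < n" "c i \<noteq> ?t" for i
    using that by (cases "i = n - 1") auto
  show ?thesis unfolding valid_def
  proof (intro conjI ballI impI)
    show "finite (c ` {0..<n})" by simp
    show "?t \<in> c ` {0..<n}" using n by auto
    show "c ` {0..<n} \<subseteq> Cs" by (rule sub)
  next
    fix v assume "v \<in> c ` {0..<n}" "v \<noteq> ?t"
    then obtain i where i: "i < n" "v = c i" by auto
    then have "i < n - 1" using ne \<open>v \<noteq> ?t\<close> by blast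
    then show "q v \<in> c ` {0..<n}" using qc i by auto
  next
    fix v assume "v \<in> c ` {0..<n}"
    then obtain i where i: "i < n" "v = c i" by auto
    show "rch q ?t ?t v" using R[of i "n-1"] i by auto
  next
    fix v w assume v: "v \<in> c ` {0..<n}" "v \<noteq> ?t" and w: "w \<in> Cs" "d v w < d v (q v)"
    then obtain i where i: "i < n" "v = c i" by auto
    then have i1: "i < n - 1" using ne v by blast
    then have "w \<in> c ` {0..i}" using near w qc i by auto
    then obtain j where "j \<le> i" "w = c j" by auto
    then show "w \<in> c ` {0..<n}" "rch q ?t v w" using R[of j i] i i1 by auto
  qed
qed


definition near :: "'a set \<Rightarrow> ('a \<Rightarrow> 'a \<Rightarrow> real) \<Rightarrow> (nat \<Rightarrow> 'a) \<Rightarrow> nat \<Rightarrow> bool" where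
  "near Cs d c i \<longleftrightarrow> c (Suc i) \<in> Cs \<and> (\<forall>w\<in>Cs. d (c i) w < d (c i) (c (Suc i)) \<longrightarrow> w \<in> c ` {0..i})"

lemma near_cong: "near Cs d c i \<Longrightarrow> (\<forall>j\<le>Suc i. c' j = c j) \<Longrightarrow> near Cs d c' i"
proof -
  assume a: "near Cs d c i" "\<forall>j\<le>Suc i. c' j = c j"
  have "c' ` {0..i} = c ` {0..i}" using a(2) by (intro image_cong) auto
  then show ?thesis using a unfolding near_def by auto
qed

definition chok :: "'a set \<Rightarrow> 'a set \<Rightarrow> 'a \<Rightarrow> (nat \<Rightarrow> 'a) \<Rightarrow> nat \<Rightarrow> bool" where
  "chok Cs K u c k \<longleftrightarrow> 1 \<le> k \<and> c 0 = u \<and> inj_on c {0..<k} \<and> c ` {0..<k} \<subseteq> Cs - K"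

lemma exists_min:
  assumes "finite A" "A \<noteq> {}"
  obtains w where "w \<in> A" "\<forall>w'\<in>A. f w \<le> (f w' :: real)"
proof -
  have "Min (f ` A) \<in> f ` A" using assms by simp
  then obtain w where "w \<in> A" "f w = Min (f ` A)" by auto
  moreover have "\<forall>w'\<in>A. Min (f ` A) \<le> f w'" using assms by simp
  ultimately show ?thesis using that by auto
qed

lemma walk_aux:
  assumes fin: "finite Cs" and K: "K \<subseteq> Cs" and u: "u \<in> Cs - K" and lc: "l \<le> card Cs"
  shows "1 \<le> n \<Longrightarrow> n \<le> l \<Longrightarrow> (\<exists>c. chok Cs K u c n \<and> (\<forall>i. Suc i < n \<longrightarrow> near Cs d c i)) \<or>
     (\<exists>c k. chok Cs K u c k \<and> (\<forall>i. Suc i < k \<longrightarrow> near Cs d c i) \<and> k < n \<and> c k \<in> K \<and> near Cs d c (k-1))"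
proof (induction n)
  case 0 then show ?case by simp
next
  case (Suc n)
  show ?case
  proof (cases "n = 0")
    case True
    have "chok Cs K u (\<lambda>_. u) 1" using u unfolding chok_def by auto
    then show ?thesis using True by auto
  next
    case False
    then have IH: "(\<exists>c. chok Cs K u c n \<and> (\<forall>i. Suc i < n \<longrightarrow> near Cs d c i)) \<or>
     (\<exists>c k. chok Cs K u c k \<and> (\<forall>i. Suc i < k \<longrightarrow> near Cs d c i) \<and> k < n \<and> c k \<in> K \<and> near Cs d c (k-1))"
      using Suc by auto
    show ?thesis
    proof (cases "\<exists>c k. chok Cs K u c k \<and> (\<forall>i. Suc i < k \<longrightarrow> near Cs d c i) \<and> k < n \<and> c k \<in> K \<and> near Cs d c (k-1)")
      case True
      then show ?thesis using less_SucI by blast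
    next
      case nf: False
      then obtain c where c: "chok Cs K u c n" "\<forall>i. Suc i < n \<longrightarrow> near Cs d c i" using IH by blast
      let ?A = "Cs - c ` {0..<n}"
      have "card (c ` {0..<n}) = n" using c unfolding chok_def by (simp add: card_image)
      moreover have "c ` {0..<n} \<subseteq> Cs" using c unfolding chok_def by auto
      ultimately have "?A \<noteq> {}"
      proof -
        assume cn: "card (c ` {0..<n}) = n"
        show "?A \<noteq> {}"
        proof
          assume "?A = {}"
          then have "Cs \<subseteq> c ` {0..<n}" by auto
          then have "card Cs \<le> n" using cn card_mono[of "c ` {0..<n}" Cs] by simp
          then show False using Suc.prems lc by simp
        qed
      qed
      then obtain w where w: "w \<in> ?A" "\<forall>w'\<in>?A. d (c (n-1)) w \<le> d (c (n-1)) w'"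
        using exists_min[of ?A "d (c (n-1))"] fin by auto
      define c' where "c' = c(n := w)"
      have agree: "\<forall>j<n. c' j = c j" unfolding c'_def by auto
      have img: "c' ` {0..<n} = c ` {0..<n}" using agree by (intro image_cong) auto
      have img2: "c' ` {0..n-1} = c ` {0..<n}" using img False
        by (metis One_nat_def Suc_pred atLeastLessThanSuc_atLeastAtMost not_gr0)
      have nr: "near Cs d c' (n-1)"
        unfolding near_def
      proof
        have sn: "Suc (n - 1) = n" using False by simp
        show "c' (Suc (n - 1)) \<in> Cs" using w sn unfolding c'_def by simp
        have cn: "c' (n-1) = c (n-1)" using agree False by simp
        show "\<forall>w'\<in>Cs. d (c' (n - 1)) w' < d (c' (n - 1)) (c' (Suc (n - 1))) \<longrightarrow> w' \<in> c' ` {0..n - 1}"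
        proof (intro ballI impI)
          fix w' assume w': "w' \<in> Cs" "d (c' (n-1)) w' < d (c' (n-1)) (c' (Suc (n-1)))"
          have cw: "c' (Suc (n-1)) = w" using sn unfolding c'_def by simp
          have "d (c (n-1)) w' < d (c (n-1)) w" using w'(2) cn cw by simp
          then have "w' \<notin> ?A" using w(2) by (meson not_le)
          then show "w' \<in> c' ` {0..n-1}" using img2 w'(1) by auto
        qed
      qed
      have near_old: "\<forall>i. Suc i < n \<longrightarrow> near Cs d c' i"
      proof (intro allI impI)
        fix i assume i: "Suc i < n"
        then have "near Cs d c i" using c(2) by blast
        moreover have "\<forall>j\<le>Suc i. c' j = c j" using agree i by auto
        ultimately show "near Cs d c' i" by (rule near_cong)
      qed
      have ok': "chok Cs K u c' n" using c agree img False unfolding chok_def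
        by (auto simp: inj_on_def c'_def)
      show ?thesis
      proof (cases "w \<in> K")
        case True
        have "c' n \<in> K" using True unfolding c'_def by simp
        then show ?thesis using ok' near_old nr nf by auto
      next
        case wK: False
        have "chok Cs K u c' (Suc n)"
          unfolding chok_def
        proof (intro conjI)
          show "1 \<le> Suc n" by simp
          show "c' 0 = u" using ok' unfolding chok_def by simp
          have "{0..<Suc n} = insert n {0..<n}" by auto
          then have "c' ` {0..<Suc n} = insert (c' n) (c' ` {0..<n})" by simp
          moreover have "c' n = w" unfolding c'_def by simp
          ultimately have e: "c' ` {0..<Suc n} = insert w (c ` {0..<n})" using img by simp
          show "c' ` {0..<Suc n} \<subseteq> Cs - K" using e w wK c unfolding chok_def by auto
          have "inj_on c' {0..<n}" using ok' unfolding chok_def by simp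
          moreover have "c' n \<notin> c' ` {0..<n}" using img w unfolding c'_def by simp
          ultimately show "inj_on c' {0..<Suc n}" using \<open>{0..<Suc n} = insert n {0..<n}\<close> by simp
        qed
        moreover have "\<forall>i. Suc i < Suc n \<longrightarrow> near Cs d c' i"
        proof (intro allI impI)
          fix i assume "Suc i < Suc n"
          then show "near Cs d c' i" using near_old nr by (cases "i = n - 1") auto
        qed
        ultimately show ?thesis by blast
      qed
    qed
  qed
qed




lemma ar1: "k \<le> l \<Longrightarrow> 1 \<le> (l::nat) \<Longrightarrow> k + k * (l - 2) \<le> l ^ 2"
proof -
  assume a: "k \<le> l" "1 \<le> l"
  have "k * (l - 2) \<le> l * (l - 2)" by (rule mult_le_mono1[OF a(1)])
  then have "k + k * (l - 2) \<le> l + l * (l - 2)" using a(1) by linarith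
  also have "\<dots> \<le> l ^ 2"
  proof (cases "l = 1")
    case False
    obtain m where m: "l = m + 2" using False a by (intro that[of "l - 2"]) simp
    show ?thesis unfolding m by (simp add: power2_eq_square algebra_simps)
  qed simp
  finally show ?thesis .
qed

lemma ar2: "x \<le> l - 2 \<Longrightarrow> y < l \<Longrightarrow> 1 \<le> (l::nat) \<Longrightarrow> x + y + 1 \<le> l ^ 2"
proof -
  assume a: "x \<le> l - 2" "y < l" "1 \<le> l"
  have "x + y + 1 \<le> (l - 2) + l" using a by simp
  also have "\<dots> \<le> l ^ 2"
  proof (cases "l = 1")
    case False
    obtain m where m: "l = m + 2" using False a by (intro that[of "l - 2"]) simp
    show ?thesis unfolding m by (simp add: power2_eq_square algebra_simps)
  qed simp
  finally show ?thesis .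
qed

lemma valid_single: "a \<in> Cs \<Longrightarrow> valid Cs d q {a} a"
  unfolding valid_def by (auto intro: rch.base)

definition good :: "'a set \<Rightarrow> ('a \<Rightarrow> 'a \<Rightarrow> real) \<Rightarrow> nat \<Rightarrow> 'a set \<Rightarrow> ('a \<Rightarrow> 'a) \<Rightarrow> ('a set \<times> 'a) set \<Rightarrow> ('a \<Rightarrow> 'a set) \<Rightarrow> bool" where
"good Cs d l K q P pend \<longleftrightarrow>
 (\<forall>V t. (V,t) \<in> P \<longrightarrow> valid Cs d q V t \<and> l \<le> card V \<and> card V \<le> l^2 \<and> V - {t} \<subseteq> Cs - K) \<and>
 (\<forall>V t V' t'. (V,t) \<in> P \<longrightarrow> (V',t') \<in> P \<longrightarrow> (V,t) \<noteq> (V',t') \<longrightarrow> (V-{t}) \<inter> (V'-{t'}) = {}) \<and>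
 (\<forall>a\<in>K. valid Cs d q (insert a (pend a)) a \<and> pend a \<subseteq> Cs - K \<and> card (pend a) \<le> l - 2) \<and>
 (\<forall>a\<in>K. \<forall>b\<in>K. a \<noteq> b \<longrightarrow> pend a \<inter> pend b = {}) \<and>
 (\<forall>a\<in>K. \<forall>V t. (V,t) \<in> P \<longrightarrow> pend a \<inter> (V - {t}) = {}) \<and>
 (Cs - K \<subseteq> (\<Union>p\<in>P. fst p) \<union> (\<Union>a\<in>K. pend a))"

lemma good_cong:
  assumes "good Cs d l K q P pend" "\<forall>v\<in>Cs - K. q' v = q v"
  shows "good Cs d l K q' P pend"
proof -
  have "valid Cs d q' V t" if "(V,t) \<in> P" for V t
  proof -
    have v: "valid Cs d q V t" "V - {t} \<subseteq> Cs - K" using assms(1) that unfolding good_def by auto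
    have "\<forall>y\<in>V. y \<noteq> t \<longrightarrow> q' y = q y" using v(2) assms(2) by blast
    then show ?thesis by (rule valid_cong[OF v(1)])
  qed
  moreover have "valid Cs d q' (insert a (pend a)) a" if "a \<in> K" for a
  proof -
    have v: "valid Cs d q (insert a (pend a)) a" "pend a \<subseteq> Cs - K" using assms(1) that unfolding good_def by auto
    have "\<forall>y\<in>insert a (pend a). y \<noteq> a \<longrightarrow> q' y = q y" using v(2) assms(2) by blast
    then show ?thesis by (rule valid_cong[OF v(1)])
  qed
  moreover note g = assms(1)[unfolded good_def]
  ultimately show ?thesis unfolding good_def
    apply (intro conjI)
    subgoal by (metis g)
    subgoal using g by (elim conjE) assumption
    subgoal by (metis g)
    subgoal using g by (elim conjE) assumption
    subgoal using g by (elim conjE) assumption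
    subgoal using g by (elim conjE) assumption
    done
qed


lemma good_empty:
  assumes "K \<subseteq> Cs" "Cs - K = {}"
  shows "good Cs d l K q {} (\<lambda>_. {})"
  unfolding good_def using assms valid_single[of _ Cs d q] by auto

lemma main_step:
  assumes fin: "finite Cs" and l1: "1 \<le> l" and lc: "l \<le> card Cs"
    and K: "K \<subseteq> Cs" and u: "u \<in> Cs - K"
    and ch: "chok Cs K u c k" "\<forall>i. Suc i < k \<longrightarrow> near Cs d c i" "k \<le> l"
       "k = l \<or> (k < l \<and> c k \<in> K \<and> near Cs d c (k-1))"
    and G0: "good Cs d l (K \<union> c ` {0..<k}) q1 P1 pend1"
  shows "\<exists>q P pend. good Cs d l K q P pend"
proof -
  define C where "C = c ` {0..<k}"
  define K' where "K' = K \<union> C"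
  define q where "q v = (if v \<in> C then c (Suc (inv_into {0..<k} c v)) else q1 v)" for v
  have k1: "1 \<le> k" and inj: "inj_on c {0..<k}" and CK: "C \<subseteq> Cs - K" using ch(1) unfolding chok_def C_def by auto
  have finC: "finite C" and cardC: "card C = k" using inj unfolding C_def by (auto simp: card_image)
  have qc: "q (c i) = c (Suc i)" if "i < k" for i
    using that inj unfolding q_def C_def by (auto simp: inv_into_f_f)
  have "good Cs d l K' q P1 pend1"
    by (rule good_cong[OF G0[folded C_def K'_def]]) (auto simp: q_def K'_def)
  note G = this[unfolded good_def]
  have G1: "\<And>V t. (V,t) \<in> P1 \<Longrightarrow> valid Cs d q V t \<and> l \<le> card V \<and> card V \<le> l^2 \<and> V - {t} \<subseteq> Cs - K'"
    using G[THEN conjunct1] by blast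
  have G2: "\<And>V t V' t'. (V,t) \<in> P1 \<Longrightarrow> (V',t') \<in> P1 \<Longrightarrow> (V,t) \<noteq> (V',t') \<Longrightarrow> (V-{t}) \<inter> (V'-{t'}) = {}"
    using G[THEN conjunct2, THEN conjunct1] by blast
  have G3: "\<And>a. a \<in> K' \<Longrightarrow> valid Cs d q (insert a (pend1 a)) a \<and> pend1 a \<subseteq> Cs - K' \<and> card (pend1 a) \<le> l - 2"
    using G[THEN conjunct2, THEN conjunct2, THEN conjunct1] by blast
  have G4: "\<And>a b. a \<in> K' \<Longrightarrow> b \<in> K' \<Longrightarrow> a \<noteq> b \<Longrightarrow> pend1 a \<inter> pend1 b = {}"
    using G[THEN conjunct2, THEN conjunct2, THEN conjunct2, THEN conjunct1] by blast
  have G5: "\<And>a V t. a \<in> K' \<Longrightarrow> (V,t) \<in> P1 \<Longrightarrow> pend1 a \<inter> (V - {t}) = {}"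
    using G[THEN conjunct2, THEN conjunct2, THEN conjunct2, THEN conjunct2, THEN conjunct1] by blast
  have G6: "Cs - K' \<subseteq> (\<Union>p\<in>P1. fst p) \<union> (\<Union>a\<in>K'. pend1 a)"
    using G[THEN conjunct2, THEN conjunct2, THEN conjunct2, THEN conjunct2, THEN conjunct2] by blast
  define e where "e = c (k - 1)"
  define R where "R = C \<union> (\<Union>v\<in>C. pend1 v)"
  have CsC: "C \<subseteq> Cs" using CK by auto
  have Vchain: "valid Cs d q C e"
    unfolding C_def e_def
    by (rule valid_chain[OF k1 inj]) (use CsC qc ch(2) in \<open>auto simp: C_def near_def\<close>)
  have pendC: "\<And>v. v \<in> C \<Longrightarrow> pend1 v \<inter> C = {}" using G3 unfolding K'_def by blast
  have VR: "valid Cs d q R e"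
    unfolding R_def
    by (rule valid_hang_many[OF finC Vchain]) (use G3 G4 pendC in \<open>auto simp: K'_def\<close>)
  have finR: "finite R" using VR unfolding valid_def by simp
  have pcard: "\<And>v. v \<in> C \<Longrightarrow> card (pend1 v) \<le> l - 2" using G3 unfolding K'_def by blast
  have "card R \<le> card C + card (\<Union>v\<in>C. pend1 v)" unfolding R_def by (rule card_Un_le)
  also have "card (\<Union>v\<in>C. pend1 v) \<le> (\<Sum>v\<in>C. card (pend1 v))" by (rule card_UN_le[OF finC])
  also have "(\<Sum>v\<in>C. card (pend1 v)) \<le> card C * (l - 2)" using sum_bounded_above[of C "\<lambda>v. card (pend1 v)" "l - 2"] pcard by simp
  finally have cardR: "card R \<le> k + k * (l - 2)" using cardC by simp
  have cardR2: "k \<le> card R" using cardC finR unfolding R_def by (metis card_mono sup_ge1)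
  have Rsub: "R \<subseteq> Cs - K" using CK G3 unfolding R_def K'_def by blast
  have Rdisj: "\<And>V t. (V,t) \<in> P1 \<Longrightarrow> R \<inter> (V - {t}) = {}"
  proof -
    fix V t assume Vt: "(V,t) \<in> P1"
    then have "C \<inter> (V - {t}) = {}" using G1[OF Vt] unfolding K'_def by blast
    moreover have "\<forall>v\<in>C. pend1 v \<inter> (V - {t}) = {}" using G5 Vt unfolding K'_def by blast
    ultimately show "R \<inter> (V - {t}) = {}" unfolding R_def by blast
  qed
  have Rpend: "\<And>b. b \<in> K \<Longrightarrow> pend1 b \<inter> R = {}"
  proof -
    fix b assume b: "b \<in> K"
    then have "b \<notin> C" using CK by blast
    have "pend1 b \<inter> C = {}" using G3 b unfolding K'_def by blast
    moreover have "\<forall>v\<in>C. pend1 b \<inter> pend1 v = {}" using G4 b \<open>b \<notin> C\<close> unfolding K'_def by blast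
    ultimately show "pend1 b \<inter> R = {}" unfolding R_def by blast
  qed
  have cover1: "Cs - K \<subseteq> R \<union> (\<Union>p\<in>P1. fst p) \<union> (\<Union>b\<in>K. pend1 b)"
  proof
    fix x assume x: "x \<in> Cs - K"
    show "x \<in> R \<union> (\<Union>p\<in>P1. fst p) \<union> (\<Union>b\<in>K. pend1 b)"
    proof (cases "x \<in> C")
      case True then show ?thesis unfolding R_def by blast
    next
      case False
      then have "x \<in> Cs - K'" using x unfolding K'_def by blast
      then have "x \<in> (\<Union>p\<in>P1. fst p) \<or> (\<exists>b\<in>K'. x \<in> pend1 b)" using G6 by blast
      then show ?thesis unfolding K'_def R_def by blast
    qed
  qed
  show ?thesis
  proof (cases "l \<le> card R")
    case True
    have "good Cs d l K q (insert (R, e) P1) pend1"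
      unfolding good_def
    proof (intro conjI)
      show "\<forall>V t. (V,t) \<in> insert (R, e) P1 \<longrightarrow> valid Cs d q V t \<and> l \<le> card V \<and> card V \<le> l^2 \<and> V - {t} \<subseteq> Cs - K"
      proof (intro allI impI)
        fix V t assume "(V,t) \<in> insert (R, e) P1"
        then show "valid Cs d q V t \<and> l \<le> card V \<and> card V \<le> l^2 \<and> V - {t} \<subseteq> Cs - K"
        proof
          assume "(V,t) = (R, e)"
          then show ?thesis using VR True cardR ar1[OF ch(3) l1] Rsub by auto
        next
          assume "(V,t) \<in> P1"
          then show ?thesis using G1 unfolding K'_def by blast
        qed
      qed
      show "\<forall>V t V' t'. (V,t) \<in> insert (R, e) P1 \<longrightarrow> (V',t') \<in> insert (R, e) P1 \<longrightarrow> (V,t) \<noteq> (V',t') \<longrightarrow> (V-{t}) \<inter> (V'-{t'}) = {}"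
        using G2 Rdisj by blast
      show "\<forall>a\<in>K. valid Cs d q (insert a (pend1 a)) a \<and> pend1 a \<subseteq> Cs - K \<and> card (pend1 a) \<le> l - 2"
        using G3 unfolding K'_def by blast
      show "\<forall>a\<in>K. \<forall>b\<in>K. a \<noteq> b \<longrightarrow> pend1 a \<inter> pend1 b = {}"
        using G4 unfolding K'_def by blast
      show "\<forall>a\<in>K. \<forall>V t. (V,t) \<in> insert (R, e) P1 \<longrightarrow> pend1 a \<inter> (V - {t}) = {}"
        using G5 Rpend unfolding K'_def by blast
      show "Cs - K \<subseteq> (\<Union>p\<in>insert (R, e) P1. fst p) \<union> (\<Union>a\<in>K. pend1 a)"
        using cover1 by auto
    qed
    then show ?thesis by blast
  next
    case False
    then have att: "k < l" "c k \<in> K" "near Cs d c (k-1)" using ch(4) cardR2 by auto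
    define a where "a = c k"
    have aK: "a \<in> K" and aC: "a \<notin> C" using att CK unfolding a_def by auto
    have inj2: "inj_on c {0..<Suc k}" using inj aC unfolding C_def a_def by (simp add: atLeast0_lessThan_Suc)
    have img2: "c ` {0..<Suc k} = insert a C" unfolding C_def a_def by (simp add: atLeast0_lessThan_Suc)
    have near2: "\<forall>i. Suc i < Suc k \<longrightarrow> (\<forall>w\<in>Cs. d (c i) w < d (c i) (c (Suc i)) \<longrightarrow> w \<in> c ` {0..i})"
    proof (intro allI impI)
      fix i assume "Suc i < Suc k"
      then have "near Cs d c i" using ch(2) att(3) by (cases "i = k - 1") auto
      then show "\<forall>w\<in>Cs. d (c i) w < d (c i) (c (Suc i)) \<longrightarrow> w \<in> c ` {0..i}" unfolding near_def by blast
    qed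
    have VaC: "valid Cs d q (insert a C) a"
      using valid_chain[OF _ inj2, of Cs q d] img2 near2 qc CsC aK K unfolding a_def by auto
    have pendaC: "\<And>v. v \<in> C \<Longrightarrow> pend1 v \<inter> insert a C = {}" using G3 aK unfolding K'_def by blast
    have VaR: "valid Cs d q (insert a C \<union> (\<Union>v\<in>C. pend1 v)) a"
      by (rule valid_hang_many[OF finC VaC]) (use G3 G4 pendaC in \<open>auto simp: K'_def\<close>)
    then have VaR: "valid Cs d q (insert a R) a" unfolding R_def by simp
    define R' where "R' = pend1 a \<union> R"
    have aK': "a \<in> K'" using aK unfolding K'_def by simp
    have pa: "pend1 a \<subseteq> Cs - K'" "card (pend1 a) \<le> l - 2" "valid Cs d q (insert a (pend1 a)) a"
      using G3[OF aK'] by auto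
    have paR: "pend1 a \<inter> insert a R = {}" using Rpend[OF aK] pa(1) aK' by blast
    have VaR': "valid Cs d q (insert a R') a"
    proof -
      have "valid Cs d q (insert a (pend1 a) \<union> insert a R) a"
        by (rule valid_hang[OF pa(3) VaR]) (use paR in auto)
      then show ?thesis unfolding R'_def by simp
    qed
    have aR': "a \<notin> R'" using paR aC Rsub aK unfolding R'_def by blast
    have finR': "finite R'" using VaR' unfolding valid_def by simp
    have cardR': "card R' \<le> (l - 2) + card R" unfolding R'_def using card_Un_le[of "pend1 a" R] pa(2) by linarith
    have cardiR': "card (insert a R') = card R' + 1" using aR' finR' by simp
    have R'sub: "R' \<subseteq> Cs - K" using pa(1) Rsub unfolding R'_def K'_def by blast
    have R'disj: "\<And>V t. (V,t) \<in> P1 \<Longrightarrow> R' \<inter> (V - {t}) = {}"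
      using Rdisj G5[OF aK'] unfolding R'_def by blast
    have R'pend: "\<And>b. b \<in> K \<Longrightarrow> b \<noteq> a \<Longrightarrow> pend1 b \<inter> R' = {}"
      using Rpend G4 aK' unfolding R'_def K'_def by blast
    show ?thesis
    proof (cases "l \<le> card R' + 1")
      case True
      have "good Cs d l K q (insert (insert a R', a) P1) (pend1(a := {}))"
        unfolding good_def
      proof (intro conjI)
        show "\<forall>V t. (V,t) \<in> insert (insert a R', a) P1 \<longrightarrow> valid Cs d q V t \<and> l \<le> card V \<and> card V \<le> l^2 \<and> V - {t} \<subseteq> Cs - K"
        proof (intro allI impI)
          fix V t assume "(V,t) \<in> insert (insert a R', a) P1"
          then show "valid Cs d q V t \<and> l \<le> card V \<and> card V \<le> l^2 \<and> V - {t} \<subseteq> Cs - K"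
          proof
            assume "(V,t) = (insert a R', a)"
            moreover have "card (insert a R') \<le> l^2"
              using cardiR' cardR' False ar2[of "l - 2" l "card R", OF order.refl _ l1] by linarith
            moreover have "insert a R' - {a} \<subseteq> Cs - K" using R'sub by blast
            ultimately show ?thesis using VaR' True cardiR' by auto
          next
            assume "(V,t) \<in> P1"
            then show ?thesis using G1 unfolding K'_def by blast
          qed
        qed
        have "insert a R' - {a} = R'" using aR' by blast
        then show "\<forall>V t V' t'. (V,t) \<in> insert (insert a R', a) P1 \<longrightarrow> (V',t') \<in> insert (insert a R', a) P1 \<longrightarrow> (V,t) \<noteq> (V',t') \<longrightarrow> (V-{t}) \<inter> (V'-{t'}) = {}"
        proof (intro allI impI)
          fix V t V' t' assume A: "(V,t) \<in> insert (insert a R', a) P1" "(V',t') \<in> insert (insert a R', a) P1" "(V,t) \<noteq> (V',t')"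
          show "(V-{t}) \<inter> (V'-{t'}) = {}"
          proof (cases "(V,t) \<in> P1")
            case True
            show ?thesis
            proof (cases "(V',t') \<in> P1")
              case True then show ?thesis using G2 A \<open>(V,t) \<in> P1\<close> by blast
            next
              case False then have "(V',t') = (insert a R', a)" using A by blast
              then show ?thesis using R'disj[OF \<open>(V,t) \<in> P1\<close>] \<open>insert a R' - {a} = R'\<close> by auto
            qed
          next
            case False then have e1: "(V,t) = (insert a R', a)" using A by blast
            then have "(V',t') \<in> P1" using A by auto
            then show ?thesis using R'disj e1 \<open>insert a R' - {a} = R'\<close> by auto
          qed
        qed
        show "\<forall>b\<in>K. valid Cs d q (insert b ((pend1(a := {})) b)) b \<and> (pend1(a := {})) b \<subseteq> Cs - K \<and> card ((pend1(a := {})) b) \<le> l - 2"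
        proof
          fix b assume b: "b \<in> K"
          show "valid Cs d q (insert b ((pend1(a := {})) b)) b \<and> (pend1(a := {})) b \<subseteq> Cs - K \<and> card ((pend1(a := {})) b) \<le> l - 2"
          proof (cases "b = a")
            case True then show ?thesis using valid_single[of b Cs d q] b K by auto
          next
            case False then show ?thesis using G3[of b] b unfolding K'_def by auto
          qed
        qed
        show "\<forall>x\<in>K. \<forall>b\<in>K. x \<noteq> b \<longrightarrow> (pend1(a := {})) x \<inter> (pend1(a := {})) b = {}"
          using G4 unfolding K'_def by auto
        show "\<forall>b\<in>K. \<forall>V t. (V,t) \<in> insert (insert a R', a) P1 \<longrightarrow> (pend1(a := {})) b \<inter> (V - {t}) = {}"
          using G5 R'pend \<open>insert a R' - {a} = R'\<close> unfolding K'_def by auto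
        show "Cs - K \<subseteq> (\<Union>p\<in>insert (insert a R', a) P1. fst p) \<union> (\<Union>b\<in>K. (pend1(a := {})) b)"
        proof
          fix x assume "x \<in> Cs - K"
          then have "x \<in> R \<or> x \<in> (\<Union>p\<in>P1. fst p) \<or> (\<exists>b\<in>K. x \<in> pend1 b)" using cover1 by blast
          then show "x \<in> (\<Union>p\<in>insert (insert a R', a) P1. fst p) \<union> (\<Union>b\<in>K. (pend1(a := {})) b)"
            unfolding R'_def by (cases "x \<in> pend1 a") auto
        qed
      qed
      then show ?thesis by blast
    next
      case False2: False
      have "good Cs d l K q P1 (pend1(a := R'))"
        unfolding good_def
      proof (intro conjI)
        show "\<forall>V t. (V,t) \<in> P1 \<longrightarrow> valid Cs d q V t \<and> l \<le> card V \<and> card V \<le> l^2 \<and> V - {t} \<subseteq> Cs - K"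
          using G1 unfolding K'_def by blast
        show "\<forall>V t V' t'. (V,t) \<in> P1 \<longrightarrow> (V',t') \<in> P1 \<longrightarrow> (V,t) \<noteq> (V',t') \<longrightarrow> (V-{t}) \<inter> (V'-{t'}) = {}"
          using G2 by blast
        show "\<forall>b\<in>K. valid Cs d q (insert b ((pend1(a := R')) b)) b \<and> (pend1(a := R')) b \<subseteq> Cs - K \<and> card ((pend1(a := R')) b) \<le> l - 2"
        proof
          fix b assume b: "b \<in> K"
          show "valid Cs d q (insert b ((pend1(a := R')) b)) b \<and> (pend1(a := R')) b \<subseteq> Cs - K \<and> card ((pend1(a := R')) b) \<le> l - 2"
          proof (cases "b = a")
            case True then show ?thesis using VaR' R'sub False2 by auto
          next
            case False then show ?thesis using G3[of b] b unfolding K'_def by auto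
          qed
        qed
        show "\<forall>x\<in>K. \<forall>b\<in>K. x \<noteq> b \<longrightarrow> (pend1(a := R')) x \<inter> (pend1(a := R')) b = {}"
          using G4 R'pend unfolding K'_def by auto
        show "\<forall>b\<in>K. \<forall>V t. (V,t) \<in> P1 \<longrightarrow> (pend1(a := R')) b \<inter> (V - {t}) = {}"
          using G5 R'disj unfolding K'_def by auto
        show "Cs - K \<subseteq> (\<Union>p\<in>P1. fst p) \<union> (\<Union>b\<in>K. (pend1(a := R')) b)"
        proof
          fix x assume "x \<in> Cs - K"
          then have "x \<in> R \<or> x \<in> (\<Union>p\<in>P1. fst p) \<or> (\<exists>b\<in>K. x \<in> pend1 b)" using cover1 by blast
          then show "x \<in> (\<Union>p\<in>P1. fst p) \<union> (\<Union>b\<in>K. (pend1(a := R')) b)"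
            using aK unfolding R'_def by (cases "x \<in> pend1 a") auto
        qed
      qed
      then show ?thesis by blast
    qed
  qed
qed


lemma main_all:
  assumes fin: "finite Cs" and l1: "1 \<le> l" and lc: "l \<le> card Cs"
  shows "K \<subseteq> Cs \<Longrightarrow> \<exists>q P pend. good Cs d l K q P pend"
proof (induction "card (Cs - K)" arbitrary: K rule: less_induct)
  case less
  show ?case
  proof (cases "Cs - K = {}")
    case True then show ?thesis using good_empty[OF less.prems True] by blast
  next
    case False
    then obtain u where u: "u \<in> Cs - K" by blast
    have W: "(\<exists>c. chok Cs K u c l \<and> (\<forall>i. Suc i < l \<longrightarrow> near Cs d c i)) \<or>
     (\<exists>c k. chok Cs K u c k \<and> (\<forall>i. Suc i < k \<longrightarrow> near Cs d c i) \<and> k < l \<and> c k \<in> K \<and> near Cs d c (k-1))"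
      by (rule walk_aux[OF fin less.prems u lc l1 order.refl])
    obtain c k where ch: "chok Cs K u c k" "\<forall>i. Suc i < k \<longrightarrow> near Cs d c i" "k \<le> l"
       "k = l \<or> (k < l \<and> c k \<in> K \<and> near Cs d c (k-1))"
      using W by (metis order.refl less_imp_le)
    have "u \<in> c ` {0..<k}" using ch(1) unfolding chok_def by (metis atLeastLessThan_iff image_eqI le_eq_less_or_eq less_le_trans not_one_le_zero zero_less_one)
    then have "Cs - (K \<union> c ` {0..<k}) \<subset> Cs - K" using u by blast
    then have "card (Cs - (K \<union> c ` {0..<k})) < card (Cs - K)" using fin by (meson finite_Diff psubset_card_mono)
    moreover have "K \<union> c ` {0..<k} \<subseteq> Cs" using less.prems ch(1) unfolding chok_def by auto
    ultimately obtain q1 P1 pend1 where "good Cs d l (K \<union> c ` {0..<k}) q1 P1 pend1"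
      using less.hyps by blast
    then show ?thesis by (rule main_step[OF fin l1 lc less.prems u ch])
  qed
qed


theorem lemma4:
  fixes F C :: "'a set" and d x :: "'a \<Rightarrow> 'a \<Rightarrow> real" and l0 l :: nat and Cs :: "'a set"
  assumes "finite F" and "finite C"
    and "is_metric_on (F \<union> C) d"
    and "\<forall>i\<in>F. \<forall>j\<in>C. x i j \<ge> 0"
    and "\<forall>j\<in>C. (\<Sum>i\<in>F. x i j) = 1"
    and "l0 > 0"
    and "client_reps F C d x l0 Cs"
    and "l > 0" and "card Cs \<ge> l"
  shows "\<exists>TT :: 'a rtree set.
           (\<forall>T\<in>TT. neighborhood_tree d Cs T) \<and>
           (\<forall>(V, E, r)\<in>TT. l \<le> card V \<and> card V \<le> l^2) \<and>
           (\<Union>(V, E, r)\<in>TT. V) = Cs \<and>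
           (\<forall>(V, E, r)\<in>TT. \<forall>(V', E', r')\<in>TT.
               (V, E, r) \<noteq> (V', E', r') \<longrightarrow> (V - {r}) \<inter> (V' - {r'}) = {})"
proof -
  have fin: "finite Cs" using assms(8,9) by (metis card.infinite not_less_zero le_zero_eq)
  have l1: "1 \<le> l" using assms(8) by simp
  obtain q P pend where g: "good Cs d l {} q P pend" using main_all[OF fin l1 assms(9)] by blast
  note G = g[unfolded good_def]
  have G1: "\<And>V t. (V,t) \<in> P \<Longrightarrow> valid Cs d q V t \<and> l \<le> card V \<and> card V \<le> l^2"
    using G[THEN conjunct1] by blast
  have G2: "\<And>V t V' t'. (V,t) \<in> P \<Longrightarrow> (V',t') \<in> P \<Longrightarrow> (V,t) \<noteq> (V',t') \<Longrightarrow> (V-{t}) \<inter> (V'-{t'}) = {}"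
    using G[THEN conjunct2, THEN conjunct1] by blast
  have G6: "Cs \<subseteq> (\<Union>p\<in>P. fst p)"
    using G[THEN conjunct2, THEN conjunct2, THEN conjunct2, THEN conjunct2, THEN conjunct2] by simp
  define TT where "TT = (\<lambda>(V, t). (V, edges q V t, t)) ` P"
  have mem: "\<And>V E r. (V, E, r) \<in> TT \<Longrightarrow> (V, r) \<in> P \<and> E = edges q V r"
    unfolding TT_def by auto
  have "\<forall>T\<in>TT. neighborhood_tree d Cs T"
  proof
    fix T assume "T \<in> TT"
    then obtain V t where "(V,t) \<in> P" "T = (V, edges q V t, t)" unfolding TT_def by auto
    then show "neighborhood_tree d Cs T" using valid_nbh[OF _ fin] G1 by blast
  qed
  moreover have "\<forall>(V, E, r)\<in>TT. l \<le> card V \<and> card V \<le> l^2"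
    using mem G1 by blast
  moreover have "(\<Union>(V, E, r)\<in>TT. V) = Cs"
  proof
    show "(\<Union>(V, E, r)\<in>TT. V) \<subseteq> Cs"
    proof
      fix w assume "w \<in> (\<Union>(V, E, r)\<in>TT. V)"
      then obtain V E r where "(V, E, r) \<in> TT" "w \<in> V" by auto
      then show "w \<in> Cs" using mem G1 unfolding valid_def by blast
    qed
    show "Cs \<subseteq> (\<Union>(V, E, r)\<in>TT. V)"
    proof
      fix w assume "w \<in> Cs"
      then obtain V t where "(V,t) \<in> P" "w \<in> V" using G6 by auto
      then have "(V, edges q V t, t) \<in> TT" unfolding TT_def by force
      then show "w \<in> (\<Union>(V, E, r)\<in>TT. V)" using \<open>w \<in> V\<close> by force
    qed
  qed
  moreover have "\<forall>(V, E, r)\<in>TT. \<forall>(V', E', r')\<in>TT.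
               (V, E, r) \<noteq> (V', E', r') \<longrightarrow> (V - {r}) \<inter> (V' - {r'}) = {}"
  proof -
    have H: "(V - {r}) \<inter> (V' - {r'}) = {}"
      if "(V, E, r) \<in> TT" "(V', E', r') \<in> TT" "(V, E, r) \<noteq> (V', E', r')" for V E r V' E' r'
    proof -
      have m: "(V, r) \<in> P" "E = edges q V r" "(V', r') \<in> P" "E' = edges q V' r'"
        using mem that by auto
      show ?thesis using G2[OF m(1) m(3)] m(2,4) that(3) by auto
    qed
    show ?thesis by (auto dest: H)
  qed
  ultimately show ?thesis by blast
qed


end
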